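(* Let $R$ be $\mathbb{Z}$ or $\mathbb{Z}/m\mathbb{Z}$ with $m\ge2$, let $\Lambda$ be a free abelian group with basis $x_1,\ldots,x_n$, and let $\vec r=(r_1,\ldots,r_n)$ be an $n$-tuple in $R[\Lambda]$ satisfying the flatness condition. Then every syzygy of $\vec r$ is trivial.
   Context: $R[\Lambda]$ is identified with $R[x_1^{\pm1},\ldots,x_n^{\pm1}]$; $\Lambda_i=\langle x_1,\ldots,x_i\rangle$. A polynomial $p\in R[\Lambda_i]$ is a divisor with respect to $x_i$ if, writing $p=p_kx_i^k+\cdots+p_mx_i^m$ with $p_j\in R[\Lambda_{i-1}]$ and $p_k\ne0$, $p_k$ is a monic monomial in $x_1,\ldots,x_{i-1}$. $\vec r$ satisfies the flatness condition if $r_i\in R[\Lambda_i]$ and $r_i$ is a divisor with respect to $x_i$ for all $i$. A syzygy of $\vec r$ is $(f_1,\ldots,f_n)\in R[\Lambda]^n$ with $\sum_if_ir_i=0$; it is trivial if it lies in the $R[\Lambda]$-submodule generated by the vectors $S_{ij}$ ($i\ne j$) having $r_j$ in position $i$, $-r_i$ in position $j$, and $0$ elsewhere. *)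

theory Defs
  imports "HOL-Library.Poly_Mapping"
begin

text \<open>Laurent polynomials R[x_1^{+-1},...] : finitely supported maps from
  exponent vectors (nat =>0 int, variable j = x_j) to coefficients.
  The group ring R[Lambda] with Lambda = <x_1..x_n> is the subset of those
  whose exponents only involve variables 1..n.\<close>

type_synonym 'a lpoly = "(nat \<Rightarrow>\<^sub>0 int) \<Rightarrow>\<^sub>0 'a"

definition lpoly_in :: "nat \<Rightarrow> 'a::zero lpoly \<Rightarrow> bool" where
  "lpoly_in i p \<longleftrightarrow> (\<forall>e\<in>Poly_Mapping.keys p. \<forall>j\<in>Poly_Mapping.keys e. 1 \<le> j \<and> j \<le> i)"

definition lmonom :: "'a::zero \<Rightarrow> (nat \<Rightarrow>\<^sub>0 int) \<Rightarrow> 'a lpoly" where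
  "lmonom c e = Poly_Mapping.single e c"

text \<open>Coefficient p_k of x_i^k when p is written as sum_k p_k x_i^k, with p_k
  not involving x_i.\<close>
definition xcoeff :: "nat \<Rightarrow> 'a::comm_ring_1 lpoly \<Rightarrow> int \<Rightarrow> 'a lpoly" where
  "xcoeff i p k = (\<Sum>e\<in>{e\<in>Poly_Mapping.keys p. Poly_Mapping.lookup e i = k}.
       lmonom (Poly_Mapping.lookup p e) (e - Poly_Mapping.single i k))"

definition divisor_wrt :: "nat \<Rightarrow> 'a::comm_ring_1 lpoly \<Rightarrow> bool" where
  "divisor_wrt i p \<longleftrightarrow> lpoly_in i p \<and>
     (\<exists>k. xcoeff i p k \<noteq> 0 \<and> (\<forall>j<k. xcoeff i p j = 0) \<and>
          (\<exists>e. (\<forall>j\<in>Poly_Mapping.keys e. 1 \<le> j \<and> j < i) \<and> xcoeff i p k = lmonom 1 e))"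

text \<open>Flatness condition for r_1,...,r_n (tuples are maps nat => _, indices 1..n).\<close>
definition flat :: "nat \<Rightarrow> (nat \<Rightarrow> 'a::comm_ring_1 lpoly) \<Rightarrow> bool" where
  "flat n r \<longleftrightarrow> (\<forall>i\<in>{1..n}. lpoly_in i (r i) \<and> divisor_wrt i (r i))"

definition syzygy :: "nat \<Rightarrow> (nat \<Rightarrow> 'a::comm_ring_1 lpoly) \<Rightarrow> (nat \<Rightarrow> 'a lpoly) \<Rightarrow> bool" where
  "syzygy n r f \<longleftrightarrow> (\<forall>i\<in>{1..n}. lpoly_in n (f i)) \<and> (\<Sum>i=1..n. f i * r i) = 0"

text \<open>f lies in the R[Lambda]-submodule generated by the S_ij (i ~= j):
  f = sum_{i~=j} c_ij S_ij, whose k-th component is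
  sum_{j~=k} c_kj r_j - sum_{i~=k} c_ik r_i.\<close>
definition trivial_syzygy :: "nat \<Rightarrow> (nat \<Rightarrow> 'a::comm_ring_1 lpoly) \<Rightarrow> (nat \<Rightarrow> 'a lpoly) \<Rightarrow> bool" where
  "trivial_syzygy n r f \<longleftrightarrow> (\<exists>c :: nat \<Rightarrow> nat \<Rightarrow> 'a lpoly.
     (\<forall>i j. lpoly_in n (c i j)) \<and>
     (\<forall>k\<in>{1..n}. f k = (\<Sum>j\<in>{1..n}-{k}. c k j * r j) - (\<Sum>i\<in>{1..n}-{k}. c i k * r i)))"

end

theory Submission
  imports Defs
begin

definition restr :: "((nat \<Rightarrow>\<^sub>0 int) \<Rightarrow> bool) \<Rightarrow> 'a::comm_ring_1 lpoly \<Rightarrow> 'a lpoly" where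
  "restr Q p = Poly_Mapping.mapp (\<lambda>e c. if Q e then c else 0) p"

lemma lookup_restr: "Poly_Mapping.lookup (restr Q p) e = (if Q e then Poly_Mapping.lookup p e else 0)"
  unfolding restr_def by (auto simp: lookup_mapp in_keys_iff when_def)

lemma keys_restr: "e \<in> Poly_Mapping.keys (restr Q p) \<longleftrightarrow> Q e \<and> e \<in> Poly_Mapping.keys p"
  by (simp add: in_keys_iff lookup_restr)

lemma restr_add: "restr Q (p + q) = restr Q p + restr Q q"
  by (rule poly_mapping_eqI) (simp add: lookup_restr lookup_add)

lemma restr_diff: "restr Q (p - q) = restr Q p - restr Q q"
  by (rule poly_mapping_eqI) (simp add: lookup_restr lookup_minus)

lemma restr_sum: "restr Q (sum h A) = (\<Sum>x\<in>A. restr Q (h x))"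
  by (rule poly_mapping_eqI) (simp add: lookup_restr lookup_sum)

lemma restr_id: "(\<And>e. e \<in> Poly_Mapping.keys p \<Longrightarrow> Q e) \<Longrightarrow> restr Q p = p"
  by (rule poly_mapping_eqI) (auto simp add: lookup_restr in_keys_iff)

lemma restr_zero: "(\<And>e. e \<in> Poly_Mapping.keys p \<Longrightarrow> \<not> Q e) \<Longrightarrow> restr Q p = 0"
  by (rule poly_mapping_eqI) (auto simp add: lookup_restr in_keys_iff)

lemma restr_mult:
  assumes "\<And>e1 e2. e2 \<in> Poly_Mapping.keys r \<Longrightarrow> Q (e1 + e2) = Q e1"
  shows "restr Q (a * r) = restr Q a * r"
proof (rule poly_mapping_eqI)
  fix k
  have *: "Poly_Mapping.lookup (restr Q a) l * (\<Sum>q. Poly_Mapping.lookup r q when k = l + q)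
     = (if Q k then Poly_Mapping.lookup a l * (\<Sum>q. Poly_Mapping.lookup r q when k = l + q) else 0)" for l
  proof (cases "Q k = Q l")
    case True then show ?thesis by (simp add: lookup_restr)
  next
    case False
    have zz: "(\<lambda>q. Poly_Mapping.lookup r q when k = l + q) = (\<lambda>q. 0)"
    proof
      fix q
      show "(Poly_Mapping.lookup r q when k = l + q) = 0"
      proof (cases "k = l + q \<and> Poly_Mapping.lookup r q \<noteq> 0")
        case True
        then have "q \<in> Poly_Mapping.keys r" by (simp add: in_keys_iff)
        then have "Q (l + q) = Q l" by (rule assms)
        with True False show ?thesis by simp
      next
        case False then show ?thesis by auto
      qed
    qed
    then have z: "(\<Sum>q. Poly_Mapping.lookup r q when k = l + q) = 0" by (simp only: zz Sum_any.neutral)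
    show ?thesis by (simp add: z)
  qed
  have "Poly_Mapping.lookup (restr Q a * r) k = (\<Sum>l. Poly_Mapping.lookup (restr Q a) l * (\<Sum>q. Poly_Mapping.lookup r q when k = l + q))"
    by (simp only: lookup_mult)
  also have "\<dots> = (\<Sum>l. (if Q k then Poly_Mapping.lookup a l * (\<Sum>q. Poly_Mapping.lookup r q when k = l + q) else 0))"
    by (simp only: * )
  finally show "Poly_Mapping.lookup (restr Q (a * r)) k = Poly_Mapping.lookup (restr Q a * r) k"
    by (cases "Q k") (simp_all add: lookup_restr lookup_mult)
qed

lemma restr_as_sum: "restr Q p = (\<Sum>e\<in>{e\<in>Poly_Mapping.keys p. Q e}. Poly_Mapping.single e (Poly_Mapping.lookup p e))"
proof (rule poly_mapping_eqI)
  fix x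
  have "Poly_Mapping.lookup (\<Sum>e\<in>{e\<in>Poly_Mapping.keys p. Q e}. Poly_Mapping.single e (Poly_Mapping.lookup p e)) x
     = (\<Sum>e\<in>{e\<in>Poly_Mapping.keys p. Q e}. if x = e then Poly_Mapping.lookup p e else 0)"
    by (simp add: lookup_sum lookup_single when_def eq_commute)
  also have "\<dots> = (if x \<in> {e\<in>Poly_Mapping.keys p. Q e} then Poly_Mapping.lookup p x else 0)"
    by (simp add: sum.delta')
  finally show "Poly_Mapping.lookup (restr Q p) x = Poly_Mapping.lookup (\<Sum>e\<in>{e\<in>Poly_Mapping.keys p. Q e}. Poly_Mapping.single e (Poly_Mapping.lookup p e)) x"
    by (auto simp: lookup_restr in_keys_iff)
qed

lemma xcoeff_restr:
  "restr (\<lambda>e. Poly_Mapping.lookup e n = k) p = xcoeff n p k * lmonom 1 (Poly_Mapping.single n k)"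
  unfolding xcoeff_def restr_as_sum sum_distrib_right lmonom_def
  by (simp add: mult_single)

definition inJ :: "nat \<Rightarrow> (nat \<Rightarrow> 'a::comm_ring_1 lpoly) \<Rightarrow> 'a lpoly \<Rightarrow> bool" where
  "inJ m r x \<longleftrightarrow> (\<exists>a. x = (\<Sum>i=1..m. a i * r i))"

lemma inJ_0: "inJ m r 0"
  unfolding inJ_def by (rule exI[of _ "\<lambda>i. 0"]) simp

lemma inJ_add: "inJ m r x \<Longrightarrow> inJ m r y \<Longrightarrow> inJ m r (x + y)"
  unfolding inJ_def
proof (elim exE)
  fix a b assume "x = (\<Sum>i=1..m. a i * r i)" "y = (\<Sum>i=1..m. b i * r i)"
  then show "\<exists>c. x + y = (\<Sum>i=1..m. c i * r i)"
    by (intro exI[of _ "\<lambda>i. a i + b i"]) (simp add: sum.distrib distrib_right)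
qed

lemma inJ_diff: "inJ m r x \<Longrightarrow> inJ m r y \<Longrightarrow> inJ m r (x - y)"
  unfolding inJ_def
proof (elim exE)
  fix a b assume "x = (\<Sum>i=1..m. a i * r i)" "y = (\<Sum>i=1..m. b i * r i)"
  then show "\<exists>c. x - y = (\<Sum>i=1..m. c i * r i)"
    by (intro exI[of _ "\<lambda>i. a i - b i"]) (simp add: sum_subtractf left_diff_distrib)
qed

lemma inJ_mult: "inJ m r x \<Longrightarrow> inJ m r (x * p)"
  unfolding inJ_def
proof (elim exE)
  fix a assume "x = (\<Sum>i=1..m. a i * r i)"
  then show "\<exists>c. x * p = (\<Sum>i=1..m. c i * r i)"
    by (intro exI[of _ "\<lambda>i. a i * p"]) (simp add: sum_distrib_right, rule sum.cong, simp_all add: mult_ac)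
qed

lemma inJ_restr:
  assumes "\<And>i e1 e2. i \<in> {1..m} \<Longrightarrow> e2 \<in> Poly_Mapping.keys (r i) \<Longrightarrow> Q (e1 + e2) = Q e1"
  shows "inJ m r x \<Longrightarrow> inJ m r (restr Q x)"
  unfolding inJ_def
proof (elim exE)
  fix a assume "x = (\<Sum>i=1..m. a i * r i)"
  then have "restr Q x = (\<Sum>i=1..m. restr Q (a i) * r i)"
    by (simp add: restr_sum restr_mult assms)
  then show "\<exists>c. restr Q x = (\<Sum>i=1..m. c i * r i)" by (rule exI[of _ "\<lambda>i. restr Q (a i)"])
qed

lemma keys_multE:
  assumes "e \<in> Poly_Mapping.keys (p * q)"
  obtains a b where "e = a + b" "a \<in> Poly_Mapping.keys p" "b \<in> Poly_Mapping.keys q"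
  using assms keys_mult by blast

lemma nzd:
  fixes r :: "nat \<Rightarrow> 'a::comm_ring_1 lpoly" and s :: "'a lpoly"
  assumes rn: "\<And>i e. i \<in> {1..m} \<Longrightarrow> e \<in> Poly_Mapping.keys (r i) \<Longrightarrow> Poly_Mapping.lookup e n = 0"
    and sE: "restr (\<lambda>e. Poly_Mapping.lookup e n = k0) s = Poly_Mapping.single E 1"
    and EE: "Poly_Mapping.lookup E n = k0"
    and slow: "\<And>j. j < k0 \<Longrightarrow> restr (\<lambda>e. Poly_Mapping.lookup e n = j) s = 0"
    and gs0: "inJ m r (g * s)"
  shows "inJ m r g"
proof -
  have slJ: "\<And>x k. inJ m r x \<Longrightarrow> inJ m r (restr (\<lambda>e. Poly_Mapping.lookup e n = k) x)"
    by (rule inJ_restr) (simp add: lookup_add rn)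
  have skeys: "k0 \<le> Poly_Mapping.lookup e n" if e: "e \<in> Poly_Mapping.keys s" for e
  proof (rule ccontr)
    assume "\<not> k0 \<le> Poly_Mapping.lookup e n"
    then have "restr (\<lambda>e'. Poly_Mapping.lookup e' n = Poly_Mapping.lookup e n) s = 0" using slow by simp
    then have "Poly_Mapping.lookup (restr (\<lambda>e'. Poly_Mapping.lookup e' n = Poly_Mapping.lookup e n) s) e = 0" by simp
    with e show False by (simp add: lookup_restr in_keys_iff)
  qed
  define s' where "s' = restr (\<lambda>e. k0 < Poly_Mapping.lookup e n) s"
  have sdec: "s = Poly_Mapping.single E 1 + s'"
  proof (rule poly_mapping_eqI)
    fix e
    consider "Poly_Mapping.lookup e n = k0" | "k0 < Poly_Mapping.lookup e n" | "Poly_Mapping.lookup e n < k0" by linarith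
    then show "Poly_Mapping.lookup s e = Poly_Mapping.lookup (Poly_Mapping.single E 1 + s') e"
    proof cases
      case 1
      have "Poly_Mapping.lookup (restr (\<lambda>e. Poly_Mapping.lookup e n = k0) s) e = Poly_Mapping.lookup (Poly_Mapping.single E 1) e" using sE by simp
      with 1 show ?thesis by (simp add: s'_def lookup_add lookup_restr)
    next
      case 2
      then have "E \<noteq> e" using EE by auto
      with 2 show ?thesis by (simp add: s'_def lookup_add lookup_restr lookup_single when_def)
    next
      case 3
      then have "e \<notin> Poly_Mapping.keys s" using skeys by force
      moreover have "E \<noteq> e" using 3 EE by auto
      ultimately show ?thesis using 3 by (simp add: s'_def lookup_add lookup_restr lookup_single in_keys_iff when_def)
    qed
  qed
  have s'keys: "k0 < Poly_Mapping.lookup e n" if "e \<in> Poly_Mapping.keys s'" for e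
    using that by (simp add: s'_def keys_restr)
  have Ekeys: "e = E" if "e \<in> Poly_Mapping.keys (Poly_Mapping.single E (1::'a))" for e
    using that by (simp split: if_splits)
  have Einv: "Poly_Mapping.single E 1 * Poly_Mapping.single (-E) 1 = (1::'a lpoly)"
    by (simp add: mult_single)
  have "\<forall>g. card (Poly_Mapping.keys g) = N \<longrightarrow> inJ m r (g * s) \<longrightarrow> inJ m r g" for N
  proof (induction N rule: less_induct)
    case (less N)
    show ?case
    proof (intro allI impI)
      fix g :: "'a lpoly" assume cg: "card (Poly_Mapping.keys g) = N" and gs: "inJ m r (g * s)"
      show "inJ m r g"
      proof (cases "g = 0")
        case True then show ?thesis by (simp add: inJ_0)
      next
        case False
        define K where "K = (\<lambda>e. Poly_Mapping.lookup e n) ` Poly_Mapping.keys g"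
        have finK: "finite K" "K \<noteq> {}" using False by (auto simp: K_def)
        define k where "k = Min K"
        obtain e0 where e0: "e0 \<in> Poly_Mapping.keys g" "Poly_Mapping.lookup e0 n = k"
          using Min_in[OF finK] unfolding k_def K_def by auto
        have kmin: "k \<le> Poly_Mapping.lookup e n" if "e \<in> Poly_Mapping.keys g" for e
          using finK that unfolding k_def K_def by auto
        define G0 where "G0 = restr (\<lambda>e. Poly_Mapping.lookup e n = k) g"
        define G1 where "G1 = restr (\<lambda>e. k < Poly_Mapping.lookup e n) g"
        have gdec: "g = G0 + G1"
        proof (rule poly_mapping_eqI)
          fix e
          show "Poly_Mapping.lookup g e = Poly_Mapping.lookup (G0 + G1) e"
          proof (cases "e \<in> Poly_Mapping.keys g")
            case True then have "k \<le> Poly_Mapping.lookup e n" by (rule kmin)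
            then show ?thesis by (auto simp: G0_def G1_def lookup_add lookup_restr)
          next
            case False then show ?thesis by (simp add: G0_def G1_def lookup_add lookup_restr in_keys_iff)
          qed
        qed
        have ksub: "Poly_Mapping.keys G1 \<subset> Poly_Mapping.keys g"
          using e0 by (auto simp: G1_def keys_restr)
        have cardlt: "card (Poly_Mapping.keys G1) < N"
          using psubset_card_mono[OF finite_keys ksub] cg by simp
        have prod: "g * s = G0 * Poly_Mapping.single E 1 + (G0 * s' + G1 * s)"
        proof -
          have 1: "g * s = G0 * s + G1 * s" by (subst gdec) (simp add: algebra_simps)
          have 2: "G0 * s = G0 * Poly_Mapping.single E 1 + G0 * s'" by (subst sdec) (simp add: distrib_left)
          show ?thesis unfolding 1 2 by (simp add: algebra_simps)
        qed
        have Sl: "restr (\<lambda>e. Poly_Mapping.lookup e n = k + k0) (g * s) = G0 * Poly_Mapping.single E 1"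
        proof -
          have a: "restr (\<lambda>e. Poly_Mapping.lookup e n = k + k0) (G0 * Poly_Mapping.single E 1) = G0 * Poly_Mapping.single E 1"
          proof (rule restr_id)
            fix e assume "e \<in> Poly_Mapping.keys (G0 * Poly_Mapping.single E 1)"
            then obtain a b where "e = a + b" "a \<in> Poly_Mapping.keys G0" "b \<in> Poly_Mapping.keys (Poly_Mapping.single E (1::'a))"
              by (rule keys_multE)
            then show "Poly_Mapping.lookup e n = k + k0"
              using Ekeys EE by (auto simp: G0_def keys_restr lookup_add)
          qed
          have b: "restr (\<lambda>e. Poly_Mapping.lookup e n = k + k0) (G0 * s') = 0"
          proof (rule restr_zero)
            fix e assume "e \<in> Poly_Mapping.keys (G0 * s')"
            then obtain a b where "e = a + b" "a \<in> Poly_Mapping.keys G0" "b \<in> Poly_Mapping.keys s'"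
              by (rule keys_multE)
            then show "\<not> Poly_Mapping.lookup e n = k + k0"
              using s'keys[of b] by (auto simp: G0_def keys_restr lookup_add)
          qed
          have c: "restr (\<lambda>e. Poly_Mapping.lookup e n = k + k0) (G1 * s) = 0"
          proof (rule restr_zero)
            fix e assume "e \<in> Poly_Mapping.keys (G1 * s)"
            then obtain a b where "e = a + b" "a \<in> Poly_Mapping.keys G1" "b \<in> Poly_Mapping.keys s"
              by (rule keys_multE)
            then show "\<not> Poly_Mapping.lookup e n = k + k0"
              using skeys[of b] by (auto simp: G1_def keys_restr lookup_add)
          qed
          show ?thesis unfolding prod restr_add a b c by simp
        qed
        have J1: "inJ m r (G0 * Poly_Mapping.single E 1)"
          using slJ[OF gs, of "k + k0"] Sl by simp
        have "G0 = G0 * Poly_Mapping.single E 1 * Poly_Mapping.single (-E) 1"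
          by (simp add: mult.assoc Einv)
        then have J0: "inJ m r G0" using inJ_mult[OF J1] by metis
        have "G1 * s = g * s - G0 * s" by (subst gdec) (simp add: algebra_simps)
        then have "inJ m r (G1 * s)" using inJ_diff[OF gs inJ_mult[OF J0]] by simp
        then have "inJ m r G1" using less.IH[OF cardlt] by blast
        then show ?thesis using inJ_add[OF J0] gdec by simp
      qed
    qed
  qed
  then show ?thesis using gs0 by blast
qed

lemma main_syz:
  fixes r f :: "nat \<Rightarrow> 'a::comm_ring_1 lpoly"
  assumes "flat n r" "(\<Sum>i=1..n. f i * r i) = 0"
  shows "\<exists>c. \<forall>k\<in>{1..n}. f k = (\<Sum>j\<in>{1..n}-{k}. c k j * r j) - (\<Sum>i\<in>{1..n}-{k}. c i k * r i)"
  using assms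
proof (induction n arbitrary: f)
  case 0 then show ?case by simp
next
  case (Suc m)
  let ?s = "r (Suc m)"
  have flm: "flat m r" using Suc.prems(1) by (auto simp: flat_def)
  have dv: "divisor_wrt (Suc m) ?s" using Suc.prems(1) by (auto simp: flat_def)
  then obtain k0 e0 where k0: "\<forall>j<k0. xcoeff (Suc m) ?s j = 0"
    "\<forall>j\<in>Poly_Mapping.keys e0. 1 \<le> j \<and> j < Suc m" "xcoeff (Suc m) ?s k0 = lmonom 1 e0"
    by (auto simp: divisor_wrt_def)
  define E where "E = e0 + Poly_Mapping.single (Suc m) k0"
  have "Suc m \<notin> Poly_Mapping.keys e0" using k0(2) by auto
  then have EE: "Poly_Mapping.lookup E (Suc m) = k0"
    by (simp add: E_def lookup_add in_keys_iff)
  have sE: "restr (\<lambda>e. Poly_Mapping.lookup e (Suc m) = k0) ?s = Poly_Mapping.single E 1"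
    by (simp add: xcoeff_restr k0(3) lmonom_def mult_single E_def)
  have slow: "\<And>j. j < k0 \<Longrightarrow> restr (\<lambda>e. Poly_Mapping.lookup e (Suc m) = j) ?s = 0"
    using k0(1) by (simp add: xcoeff_restr)
  have rn: "Poly_Mapping.lookup e (Suc m) = 0" if i: "i \<in> {1..m}" and e: "e \<in> Poly_Mapping.keys (r i)" for i e
  proof (rule ccontr)
    assume "Poly_Mapping.lookup e (Suc m) \<noteq> 0"
    then have "Suc m \<in> Poly_Mapping.keys e" by (simp add: in_keys_iff)
    moreover have "lpoly_in i (r i)" using Suc.prems(1) i by (auto simp: flat_def)
    moreover have "\<forall>j\<in>Poly_Mapping.keys e. j \<le> i" using calculation(2) e unfolding lpoly_in_def by blast
    ultimately show False using i by fastforce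
  qed
  have sum: "(\<Sum>i=1..Suc m. f i * r i) = (\<Sum>i=1..m. f i * r i) + f (Suc m) * ?s" by simp
  have "f (Suc m) * ?s = (\<Sum>i=1..m. (- f i) * r i)"
    using Suc.prems(2) unfolding sum by (simp add: sum_negf eq_neg_iff_add_eq_0 add.commute)
  then have "inJ m r (f (Suc m) * ?s)" unfolding inJ_def by (rule exI[of _ "\<lambda>i. - f i"])
  then have "inJ m r (f (Suc m))" using nzd[of m r "Suc m" k0 "r (Suc m)" E "f (Suc m)"] rn sE EE slow by blast
  then obtain g where g: "f (Suc m) = (\<Sum>i=1..m. g i * r i)" by (auto simp: inJ_def)
  define f' where "f' i = f i + g i * ?s" for i
  have "(\<Sum>i=1..m. f' i * r i) = (\<Sum>i=1..m. f i * r i) + (\<Sum>i=1..m. g i * r i) * ?s"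
    by (simp add: f'_def distrib_right sum.distrib sum_distrib_right, rule sum.cong, simp_all add: mult_ac)
  also have "\<dots> = 0" using Suc.prems(2) unfolding sum g by simp
  finally obtain c' where c': "\<forall>k\<in>{1..m}. f' k = (\<Sum>j\<in>{1..m}-{k}. c' k j * r j) - (\<Sum>i\<in>{1..m}-{k}. c' i k * r i)"
    using Suc.IH[OF flm] by blast
  define c where "c i j = (if i = Suc m then (if j \<le> m then g j else 0) else if j = Suc m then 0 else c' i j)" for i j
  show ?case
  proof (intro exI[of _ c] ballI)
    fix k assume k: "k \<in> {1..Suc m}"
    show "f k = (\<Sum>j\<in>{1..Suc m}-{k}. c k j * r j) - (\<Sum>i\<in>{1..Suc m}-{k}. c i k * r i)"
    proof (cases "k = Suc m")
      case True
      have A: "{1..Suc m} - {k} = {1..m}" using True by auto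
      have B: "(\<Sum>j\<in>{1..m}. c k j * r j) = (\<Sum>j=1..m. g j * r j)" by (rule sum.cong) (auto simp: c_def True)
      have C: "(\<Sum>i\<in>{1..m}. c i k * r i) = 0" by (rule sum.neutral) (auto simp: c_def True)
      show ?thesis using A B C g True by simp
    next
      case False
      then have km: "k \<in> {1..m}" using k by auto
      have A: "{1..Suc m} - {k} = insert (Suc m) ({1..m} - {k})" using km by auto
      have B: "(\<Sum>j\<in>{1..m}-{k}. c k j * r j) = (\<Sum>j\<in>{1..m}-{k}. c' k j * r j)"
        by (rule sum.cong) (use km in \<open>auto simp: c_def\<close>)
      have C: "(\<Sum>i\<in>{1..m}-{k}. c i k * r i) = (\<Sum>i\<in>{1..m}-{k}. c' i k * r i)"
        by (rule sum.cong) (use km in \<open>auto simp: c_def\<close>)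
      have ck: "c k (Suc m) = 0" "c (Suc m) k = g k" using km by (auto simp: c_def)
      have fin: "finite ({1..m} - {k})" "Suc m \<notin> {1..m} - {k}" by auto
      show ?thesis using c'[rule_format, OF km] unfolding A sum.insert[OF fin] B C ck f'_def
        by (simp add: algebra_simps)
    qed
  qed
qed

theorem lemma2p8:
  fixes r f :: "nat \<Rightarrow> ('a::comm_ring_1) lpoly" and n :: nat
  assumes R_quot_Z: "surj (of_int :: int \<Rightarrow> 'a)"
    and R_nontriv: "(0::'a) \<noteq> 1"
    and "flat n r"
    and "syzygy n r f"
  shows "trivial_syzygy n r f"
proof -
  have fin: "\<And>i. i \<in> {1..n} \<Longrightarrow> lpoly_in n (f i)" and s0: "(\<Sum>i=1..n. f i * r i) = 0"
    using assms(4) by (auto simp: syzygy_def)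
  obtain c where c: "\<forall>k\<in>{1..n}. f k = (\<Sum>j\<in>{1..n}-{k}. c k j * r j) - (\<Sum>i\<in>{1..n}-{k}. c i k * r i)"
    using main_syz[OF assms(3) s0] by blast
  define Q where "Q e = (\<forall>j\<in>Poly_Mapping.keys e. 1 \<le> j \<and> j \<le> n)" for e :: "nat \<Rightarrow>\<^sub>0 int"
  have Qadd: "Q (e1 + e2) = Q e1" if q2: "Q e2" for e1 e2
  proof
    assume q: "Q (e1 + e2)"
    show "Q e1" unfolding Q_def
    proof
      fix j assume j: "j \<in> Poly_Mapping.keys e1"
      show "1 \<le> j \<and> j \<le> n"
      proof (rule ccontr)
        assume nj: "\<not> (1 \<le> j \<and> j \<le> n)"
        then have "Poly_Mapping.lookup e2 j = 0" using q2 by (auto simp: Q_def in_keys_iff)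
        then have "j \<in> Poly_Mapping.keys (e1 + e2)" using j by (simp add: in_keys_iff lookup_add)
        then show False using q nj by (auto simp: Q_def)
      qed
    qed
  next
    assume q1: "Q e1"
    show "Q (e1 + e2)" unfolding Q_def
    proof
      fix j assume "j \<in> Poly_Mapping.keys (e1 + e2)"
      then have "j \<in> Poly_Mapping.keys e1 \<or> j \<in> Poly_Mapping.keys e2"
        by (auto simp: in_keys_iff lookup_add)
      then show "1 \<le> j \<and> j \<le> n" using q1 q2 by (auto simp: Q_def)
    qed
  qed
  have rQ: "Q e" if "j \<in> {1..n}" "e \<in> Poly_Mapping.keys (r j)" for j e
  proof -
    have "lpoly_in j (r j)" using assms(3) that(1) by (auto simp: flat_def)
    then have "\<forall>j'\<in>Poly_Mapping.keys e. 1 \<le> j' \<and> j' \<le> j" using that(2) unfolding lpoly_in_def by blast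
    then show ?thesis using that(1) by (fastforce simp: Q_def)
  qed
  define c'' where "c'' i j = restr Q (c i j)" for i j
  show ?thesis unfolding trivial_syzygy_def
  proof (intro exI[of _ c''] conjI allI ballI)
    fix i j show "lpoly_in n (c'' i j)"
      by (auto simp: lpoly_in_def c''_def keys_restr Q_def)
  next
    fix k assume k: "k \<in> {1..n}"
    have "f k = restr Q (f k)"
      using fin[OF k] by (intro restr_id[symmetric]) (auto simp: lpoly_in_def Q_def)
    also have "\<dots> = (\<Sum>j\<in>{1..n}-{k}. restr Q (c k j * r j)) - (\<Sum>i\<in>{1..n}-{k}. restr Q (c i k * r i))"
      using c k by (simp add: restr_diff restr_sum)
    also have "\<dots> = (\<Sum>j\<in>{1..n}-{k}. c'' k j * r j) - (\<Sum>i\<in>{1..n}-{k}. c'' i k * r i)"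
      unfolding c''_def
      by (intro arg_cong2[where f = minus] sum.cong refl restr_mult Qadd; rule rQ[of _ _]; auto)
    finally show "f k = (\<Sum>j\<in>{1..n}-{k}. c'' k j * r j) - (\<Sum>i\<in>{1..n}-{k}. c'' i k * r i)" .
  qed
qed

end
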